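(* Let $\mathcal{A}$ be a finite-dimensional $\mathbb{C}^*$-weak Hopf algebra, $\rho:\mathcal{A}\to M_{d_\rho}(\mathbb{C})$ a $*$-representation and $(v_{ij})_{1\le i,j\le d_v}$ a corepresentation with $S(v_{ij})=v_{ji}^*$. Define $P$ on $\mathbb{C}^{d_v}\otimes\mathbb{C}^{d_\rho}$ and $Q$ on $\mathbb{C}^{d_\rho}\otimes\mathbb{C}^{d_v}$ by $\langle i,a|P|j,b\rangle=\sum\epsilon(1_{(1)}v_{ij})\rho_{ab}(1_{(2)})$ and $\langle a,i|Q|b,j\rangle=\sum\rho_{ab}(1_{(1)})\epsilon(v_{ij}1_{(2)})$, where $\Delta(1)=\sum1_{(1)}\otimes1_{(2)}$. Then on $\mathbb{C}^{d_v}\otimes\mathbb{C}^{d_\rho}\otimes\mathbb{C}^{d_v}$ one has $(P\otimes\mathbb{1})(\mathbb{1}\otimes Q)=(\mathbb{1}\otimes Q)(P\otimes\mathbb{1})$, and on $\mathbb{C}^{d_\rho}\otimes\mathbb{C}^{d_v}\otimes\mathbb{C}^{d_\rho}$ one has $(Q\otimes\mathbb{1})(\mathbb{1}\otimes P)=(\mathbb{1}\otimes P)(Q\otimes\mathbb{1})$.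
   Context: A weak bialgebra is a finite-dimensional unital associative algebra and coassociative counital coalgebra with $\Delta(xy)=\Delta(x)\Delta(y)$, $\Delta^{(2)}(1)=(1\otimes\Delta(1))(\Delta(1)\otimes1)=(\Delta(1)\otimes1)(1\otimes\Delta(1))$ and $\epsilon(xyz)=\sum\epsilon(xy_{(1)})\epsilon(y_{(2)}z)=\sum\epsilon(xy_{(2)})\epsilon(y_{(1)}z)$. With $\epsilon_s(x)=\sum1_{(1)}\epsilon(x1_{(2)})$, $\epsilon_t(x)=\sum\epsilon(1_{(1)}x)1_{(2)}$, a weak Hopf algebra has a linear $S$ with $\sum S(x_{(1)})x_{(2)}=\epsilon_s(x)$, $\sum x_{(1)}S(x_{(2)})=\epsilon_t(x)$, $\sum S(x_{(1)})x_{(2)}S(x_{(3)})=S(x)$. A $\mathbb{C}^*$-weak Hopf algebra has an antilinear involution $*$ with $(xy)^*=y^*x^*$, $\Delta(x^* )=\Delta(x)^*$, and a faithful $*$-representation. A $*$-representation satisfies $\rho(x^* )=\rho(x)^\dagger$; a corepresentation satisfies $\Delta(v_{ij})=\sum_kv_{ik}\otimes v_{kj}$, $\epsilon(v_{ij})=\delta_{ij}$. *)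

theory Defs
  imports Complex_Main
begin

text \<open>
  A finite-dimensional algebra/coalgebra A over the complex numbers is modelled
  by a chosen basis indexed by a finite type 'i: elements of A are coefficient
  vectors 'i \<Rightarrow> complex, elements of A \<otimes> A are 'i \<Rightarrow> 'i \<Rightarrow> complex,
  elements of A \<otimes> A \<otimes> A are 'i \<Rightarrow> 'i \<Rightarrow> 'i \<Rightarrow> complex.
  All structure maps are given by structure constants with respect to the basis
  (hence are automatically (anti)linear).
\<close>

definition bas :: "'i \<Rightarrow> 'i \<Rightarrow> complex" where
  "bas b = (\<lambda>k. if k = b then 1 else 0)"

definition amul :: "('i::finite \<Rightarrow> 'i \<Rightarrow> 'i \<Rightarrow> complex) \<Rightarrow> ('i \<Rightarrow> complex) \<Rightarrow> ('i \<Rightarrow> complex) \<Rightarrow> ('i \<Rightarrow> complex)" where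
  "amul M x y = (\<lambda>k. \<Sum>i\<in>UNIV. \<Sum>j\<in>UNIV. x i * y j * M i j k)"

definition comul :: "('i::finite \<Rightarrow> 'i \<Rightarrow> 'i \<Rightarrow> complex) \<Rightarrow> ('i \<Rightarrow> complex) \<Rightarrow> ('i \<Rightarrow> 'i \<Rightarrow> complex)" where
  "comul D x = (\<lambda>i j. \<Sum>k\<in>UNIV. x k * D k i j)"

definition cnt :: "('i::finite \<Rightarrow> complex) \<Rightarrow> ('i \<Rightarrow> complex) \<Rightarrow> complex" where
  "cnt E x = (\<Sum>k\<in>UNIV. x k * E k)"

definition lin :: "('i::finite \<Rightarrow> 'i \<Rightarrow> complex) \<Rightarrow> ('i \<Rightarrow> complex) \<Rightarrow> ('i \<Rightarrow> complex)" where
  "lin L x = (\<lambda>l. \<Sum>k\<in>UNIV. x k * L k l)"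

definition alin :: "('i::finite \<Rightarrow> 'i \<Rightarrow> complex) \<Rightarrow> ('i \<Rightarrow> complex) \<Rightarrow> ('i \<Rightarrow> complex)" where
  "alin T x = (\<lambda>l. \<Sum>k\<in>UNIV. cnj (x k) * T k l)"

definition tmul :: "('i::finite \<Rightarrow> 'i \<Rightarrow> 'i \<Rightarrow> complex) \<Rightarrow> ('i \<Rightarrow> 'i \<Rightarrow> complex) \<Rightarrow> ('i \<Rightarrow> 'i \<Rightarrow> complex) \<Rightarrow> ('i \<Rightarrow> 'i \<Rightarrow> complex)" where
  "tmul M X Y = (\<lambda>i j. \<Sum>a\<in>UNIV. \<Sum>b\<in>UNIV. \<Sum>a'\<in>UNIV. \<Sum>b'\<in>UNIV.
       X a b * Y a' b' * M a a' i * M b b' j)"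

definition t3mul :: "('i::finite \<Rightarrow> 'i \<Rightarrow> 'i \<Rightarrow> complex) \<Rightarrow> ('i \<Rightarrow> 'i \<Rightarrow> 'i \<Rightarrow> complex) \<Rightarrow> ('i \<Rightarrow> 'i \<Rightarrow> 'i \<Rightarrow> complex) \<Rightarrow> ('i \<Rightarrow> 'i \<Rightarrow> 'i \<Rightarrow> complex)" where
  "t3mul M X Y = (\<lambda>i j l. \<Sum>a\<in>UNIV. \<Sum>b\<in>UNIV. \<Sum>c\<in>UNIV. \<Sum>a'\<in>UNIV. \<Sum>b'\<in>UNIV. \<Sum>c'\<in>UNIV.
       X a b c * Y a' b' c' * M a a' i * M b b' j * M c c' l)"

definition comul_l :: "('i::finite \<Rightarrow> 'i \<Rightarrow> 'i \<Rightarrow> complex) \<Rightarrow> ('i \<Rightarrow> 'i \<Rightarrow> complex) \<Rightarrow> ('i \<Rightarrow> 'i \<Rightarrow> 'i \<Rightarrow> complex)" where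
  "comul_l D X = (\<lambda>i j l. \<Sum>a\<in>UNIV. X a l * D a i j)"

definition comul_r :: "('i::finite \<Rightarrow> 'i \<Rightarrow> 'i \<Rightarrow> complex) \<Rightarrow> ('i \<Rightarrow> 'i \<Rightarrow> complex) \<Rightarrow> ('i \<Rightarrow> 'i \<Rightarrow> 'i \<Rightarrow> complex)" where
  "comul_r D X = (\<lambda>i j l. \<Sum>a\<in>UNIV. X i a * D a j l)"

definition tstar :: "('i::finite \<Rightarrow> 'i \<Rightarrow> complex) \<Rightarrow> ('i \<Rightarrow> 'i \<Rightarrow> complex) \<Rightarrow> ('i \<Rightarrow> 'i \<Rightarrow> complex)" where
  "tstar T X = (\<lambda>i j. \<Sum>a\<in>UNIV. \<Sum>b\<in>UNIV. cnj (X a b) * T a i * T b j)"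

definition eps_s where
  "eps_s M D E u x = (\<lambda>k. \<Sum>a\<in>UNIV. \<Sum>b\<in>UNIV. comul D u a b * bas a k * cnt E (amul M x (bas b)))"

definition eps_t where
  "eps_t M D E u x = (\<lambda>k. \<Sum>a\<in>UNIV. \<Sum>b\<in>UNIV. comul D u a b * cnt E (amul M (bas a) x) * bas b k)"

definition weak_bialgebra ::
  "('i::finite \<Rightarrow> 'i \<Rightarrow> 'i \<Rightarrow> complex) \<Rightarrow> ('i \<Rightarrow> complex) \<Rightarrow> ('i \<Rightarrow> 'i \<Rightarrow> 'i \<Rightarrow> complex) \<Rightarrow> ('i \<Rightarrow> complex) \<Rightarrow> bool" where
  "weak_bialgebra M u D E \<longleftrightarrow>
     (\<forall>x y z. amul M (amul M x y) z = amul M x (amul M y z)) \<and>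
     (\<forall>x. amul M u x = x \<and> amul M x u = x) \<and>
     (\<forall>x. comul_l D (comul D x) = comul_r D (comul D x)) \<and>
     (\<forall>x. (\<lambda>j. \<Sum>a\<in>UNIV. comul D x a j * E a) = x) \<and>
     (\<forall>x. (\<lambda>i. \<Sum>b\<in>UNIV. comul D x i b * E b) = x) \<and>
     (\<forall>x y. comul D (amul M x y) = tmul M (comul D x) (comul D y)) \<and>
     (let U2 = comul D u;
          L = (\<lambda>i j l. U2 i j * u l);
          R = (\<lambda>i j l. u i * U2 j l)
      in comul_l D U2 = t3mul M R L \<and> comul_l D U2 = t3mul M L R) \<and>
     (\<forall>x y z. cnt E (amul M (amul M x y) z) =
         (\<Sum>a\<in>UNIV. \<Sum>b\<in>UNIV. comul D y a b * cnt E (amul M x (bas a)) * cnt E (amul M (bas b) z))) \<and>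
     (\<forall>x y z. cnt E (amul M (amul M x y) z) =
         (\<Sum>a\<in>UNIV. \<Sum>b\<in>UNIV. comul D y a b * cnt E (amul M x (bas b)) * cnt E (amul M (bas a) z)))"

text \<open>antipode S = lin Sm\<close>
definition weak_hopf ::
  "('i::finite \<Rightarrow> 'i \<Rightarrow> 'i \<Rightarrow> complex) \<Rightarrow> ('i \<Rightarrow> complex) \<Rightarrow> ('i \<Rightarrow> 'i \<Rightarrow> 'i \<Rightarrow> complex) \<Rightarrow> ('i \<Rightarrow> complex)
   \<Rightarrow> ('i \<Rightarrow> 'i \<Rightarrow> complex) \<Rightarrow> bool" where
  "weak_hopf M u D E Sm \<longleftrightarrow> weak_bialgebra M u D E \<and>
     (\<forall>x. (\<lambda>k. \<Sum>a\<in>UNIV. \<Sum>b\<in>UNIV. comul D x a b * amul M (lin Sm (bas a)) (bas b) k) = eps_s M D E u x) \<and>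
     (\<forall>x. (\<lambda>k. \<Sum>a\<in>UNIV. \<Sum>b\<in>UNIV. comul D x a b * amul M (bas a) (lin Sm (bas b)) k) = eps_t M D E u x) \<and>
     (\<forall>x. (\<lambda>k. \<Sum>a\<in>UNIV. \<Sum>b\<in>UNIV. \<Sum>c\<in>UNIV. comul_l D (comul D x) a b c *
            amul M (amul M (lin Sm (bas a)) (bas b)) (lin Sm (bas c)) k) = lin Sm x)"

text \<open>linear map A \<rightarrow> matrices given by the images R k of the basis vectors;
  only entries with indices < d are meaningful\<close>
definition repm :: "('i::finite \<Rightarrow> nat \<Rightarrow> nat \<Rightarrow> complex) \<Rightarrow> ('i \<Rightarrow> complex) \<Rightarrow> nat \<Rightarrow> nat \<Rightarrow> complex" where
  "repm R x = (\<lambda>a b. \<Sum>k\<in>UNIV. x k * R k a b)"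

definition star_rep ::
  "('i::finite \<Rightarrow> 'i \<Rightarrow> 'i \<Rightarrow> complex) \<Rightarrow> ('i \<Rightarrow> 'i \<Rightarrow> complex) \<Rightarrow> nat \<Rightarrow> ('i \<Rightarrow> nat \<Rightarrow> nat \<Rightarrow> complex) \<Rightarrow> bool" where
  "star_rep M T d R \<longleftrightarrow>
     (\<forall>x y a b. a < d \<longrightarrow> b < d \<longrightarrow>
        repm R (amul M x y) a b = (\<Sum>c<d. repm R x a c * repm R y c b)) \<and>
     (\<forall>x a b. a < d \<longrightarrow> b < d \<longrightarrow> repm R (alin T x) a b = cnj (repm R x b a))"

definition cstar_weak_hopf ::
  "('i::finite \<Rightarrow> 'i \<Rightarrow> 'i \<Rightarrow> complex) \<Rightarrow> ('i \<Rightarrow> complex) \<Rightarrow> ('i \<Rightarrow> 'i \<Rightarrow> 'i \<Rightarrow> complex) \<Rightarrow> ('i \<Rightarrow> complex)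
   \<Rightarrow> ('i \<Rightarrow> 'i \<Rightarrow> complex) \<Rightarrow> ('i \<Rightarrow> 'i \<Rightarrow> complex) \<Rightarrow> bool" where
  "cstar_weak_hopf M u D E Sm T \<longleftrightarrow> weak_hopf M u D E Sm \<and>
     (\<forall>x. alin T (alin T x) = x) \<and>
     (\<forall>x y. alin T (amul M x y) = amul M (alin T y) (alin T x)) \<and>
     (\<forall>x. comul D (alin T x) = tstar T (comul D x)) \<and>
     (\<exists>n R. star_rep M T n R \<and>
        (\<forall>x. (\<forall>a<n. \<forall>b<n. repm R x a b = 0) \<longrightarrow> x = (\<lambda>_. 0)))"

definition corep ::
  "('i::finite \<Rightarrow> 'i \<Rightarrow> 'i \<Rightarrow> complex) \<Rightarrow> ('i \<Rightarrow> complex) \<Rightarrow> nat \<Rightarrow> (nat \<Rightarrow> nat \<Rightarrow> 'i \<Rightarrow> complex) \<Rightarrow> bool" where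
  "corep D E dv v \<longleftrightarrow>
     (\<forall>i<dv. \<forall>j<dv. comul D (v i j) = (\<lambda>a b. \<Sum>k<dv. v i k a * v k j b)) \<and>
     (\<forall>i<dv. \<forall>j<dv. cnt E (v i j) = (if i = j then 1 else 0))"

text \<open>P: <i,a|P|j,b> (stored as P i a j b); Q: <a,i|Q|b,j> (stored as Q a i b j)\<close>
definition Pop where
  "Pop M u D E R v = (\<lambda>i a j b. \<Sum>x\<in>UNIV. \<Sum>y\<in>UNIV.
      comul D u x y * cnt E (amul M (bas x) (v i j)) * repm R (bas y) a b)"

definition Qop where
  "Qop M u D E R v = (\<lambda>a i b j. \<Sum>x\<in>UNIV. \<Sum>y\<in>UNIV.
      comul D u x y * repm R (bas x) a b * cnt E (amul M (v i j) (bas y)))"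

text \<open>operators on C^d1 \<otimes> C^d2 \<otimes> C^d3 as entry functions <i,a,k|X|j,b,l> = X i a k j b l\<close>
definition ext_r :: "(nat \<Rightarrow> nat \<Rightarrow> nat \<Rightarrow> nat \<Rightarrow> complex) \<Rightarrow> nat \<Rightarrow> nat \<Rightarrow> nat \<Rightarrow> nat \<Rightarrow> nat \<Rightarrow> nat \<Rightarrow> complex" where
  "ext_r X = (\<lambda>i a k j b l. X i a j b * (if k = l then 1 else 0))"

definition ext_l :: "(nat \<Rightarrow> nat \<Rightarrow> nat \<Rightarrow> nat \<Rightarrow> complex) \<Rightarrow> nat \<Rightarrow> nat \<Rightarrow> nat \<Rightarrow> nat \<Rightarrow> nat \<Rightarrow> nat \<Rightarrow> complex" where
  "ext_l Y = (\<lambda>i a k j b l. (if i = j then 1 else 0) * Y a k b l)"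

definition comp3 :: "nat \<Rightarrow> nat \<Rightarrow> nat \<Rightarrow> (nat \<Rightarrow> nat \<Rightarrow> nat \<Rightarrow> nat \<Rightarrow> nat \<Rightarrow> nat \<Rightarrow> complex)
   \<Rightarrow> (nat \<Rightarrow> nat \<Rightarrow> nat \<Rightarrow> nat \<Rightarrow> nat \<Rightarrow> nat \<Rightarrow> complex) \<Rightarrow> nat \<Rightarrow> nat \<Rightarrow> nat \<Rightarrow> nat \<Rightarrow> nat \<Rightarrow> nat \<Rightarrow> complex" where
  "comp3 d1 d2 d3 X Y = (\<lambda>i a k j b l. \<Sum>j'<d1. \<Sum>b'<d2. \<Sum>k'<d3. X i a k j' b' k' * Y j' b' k' j b l)"

end

theory Submission
  imports Defs
begin

lemma comp3_rl:
  assumes "j < d1" "k < d3"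
  shows "comp3 d1 d2 d3 (ext_r X) (ext_l Y) i a k j b l = (\<Sum>b'<d2. X i a j b' * Y b' k b l)"
proof -
  have "comp3 d1 d2 d3 (ext_r X) (ext_l Y) i a k j b l =
     (\<Sum>j'<d1. \<Sum>b'<d2. \<Sum>k'<d3. (if k' = k then (if j' = j then X i a j' b' * Y b' k' b l else 0) else 0))"
    unfolding comp3_def ext_r_def ext_l_def by (intro sum.cong refl) auto
  also have "\<dots> = (\<Sum>j'<d1. \<Sum>b'<d2. (if j' = j then X i a j' b' * Y b' k b l else 0))"
    using assms by (simp add: sum.delta')
  also have "\<dots> = (\<Sum>j'<d1. (if j' = j then (\<Sum>b'<d2. X i a j' b' * Y b' k b l) else 0))"
    by (intro sum.cong refl) auto
  also have "\<dots> = (\<Sum>b'<d2. X i a j b' * Y b' k b l)" using assms by (simp add: sum.delta')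
  finally show ?thesis .
qed

lemma comp3_lr:
  assumes "i < d1" "l < d3"
  shows "comp3 d1 d2 d3 (ext_l Y) (ext_r X) i a k j b l = (\<Sum>b'<d2. Y a k b' l * X i b' j b)"
proof -
  have "comp3 d1 d2 d3 (ext_l Y) (ext_r X) i a k j b l =
     (\<Sum>j'<d1. \<Sum>b'<d2. \<Sum>k'<d3. (if k' = l then (if j' = i then Y a k b' k' * X j' b' j b else 0) else 0))"
    unfolding comp3_def ext_r_def ext_l_def by (intro sum.cong refl) auto
  also have "\<dots> = (\<Sum>j'<d1. \<Sum>b'<d2. (if j' = i then Y a k b' l * X j' b' j b else 0))"
    using assms by (simp add: sum.delta')
  also have "\<dots> = (\<Sum>j'<d1. (if j' = i then (\<Sum>b'<d2. Y a k b' l * X j' b' j b) else 0))"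
    by (intro sum.cong refl) auto
  also have "\<dots> = (\<Sum>b'<d2. Y a k b' l * X i b' j b)" using assms by (simp add: sum.delta')
  finally show ?thesis .
qed

lemma bas_mult[simp]: "bas b k * c = (if k = b then c else 0)" "c * bas b k = (if k = b then c else 0)"
  by (simp_all add: bas_def)

lemma if0_mult[simp]: "(a::complex) * (if P then b else 0) = (if P then a * b else 0)"
  "(if P then b else 0) * (a::complex) = (if P then b * a else 0)"
  by simp_all

lemma sum_if0[simp]: "(\<Sum>j\<in>A. if P then f j else (0::complex)) = (if P then sum f A else 0)"
  by simp

lemma repm_bas: "repm R (bas y) a b = R y a b"
  by (simp add: repm_def sum.delta' sum.delta)

lemma amul_bas: "amul M (bas x) (bas y) = M x y"
  by (rule ext) (simp add: amul_def sum.delta' sum.delta)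

lemma cnt_lin2: "cnt E (amul M X w) = (\<Sum>b\<in>UNIV. w b * cnt E (amul M X (bas b)))"
proof -
  have "cnt E (amul M X w) = (\<Sum>k\<in>UNIV. \<Sum>i\<in>UNIV. \<Sum>j\<in>UNIV. X i * w j * M i j k * E k)"
    by (simp add: cnt_def amul_def sum_distrib_right)
  also have "\<dots> = (\<Sum>j\<in>UNIV. \<Sum>k\<in>UNIV. \<Sum>i\<in>UNIV. X i * w j * M i j k * E k)"
    by (subst sum.swap, subst (2) sum.swap, rule refl)
  also have "\<dots> = (\<Sum>b\<in>UNIV. w b * cnt E (amul M X (bas b)))"
    by (simp add: cnt_def amul_def sum_distrib_left sum_distrib_right mult_ac sum.delta' sum.delta)
  finally show ?thesis .
qed

lemma cnt_lin1: "cnt E (amul M w Z) = (\<Sum>b\<in>UNIV. w b * cnt E (amul M (bas b) Z))"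
proof -
  have "cnt E (amul M w Z) = (\<Sum>k\<in>UNIV. \<Sum>i\<in>UNIV. \<Sum>j\<in>UNIV. w i * Z j * M i j k * E k)"
    by (simp add: cnt_def amul_def sum_distrib_right)
  also have "\<dots> = (\<Sum>i\<in>UNIV. \<Sum>k\<in>UNIV. \<Sum>j\<in>UNIV. w i * Z j * M i j k * E k)"
    by (subst sum.swap, rule refl)
  also have "\<dots> = (\<Sum>b\<in>UNIV. w b * cnt E (amul M (bas b) Z))"
    by (simp add: cnt_def amul_def sum_distrib_left sum_distrib_right mult_ac sum.delta' sum.delta)
  finally show ?thesis .
qed

lemma swap3: "(\<Sum>a\<in>A. \<Sum>b\<in>B. \<Sum>c\<in>C. f a b c) = (\<Sum>b\<in>B. \<Sum>c\<in>C. \<Sum>a\<in>A. f a b c)"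
  by (subst sum.swap, rule sum.cong[OF refl], rule sum.swap)

lemma unitR: assumes "weak_bialgebra M u D E" shows "(\<Sum>a'\<in>UNIV. u a' * M a a' p) = bas a p"
proof -
  have "amul M (bas a) u p = bas a p" using assms unfolding weak_bialgebra_def by metis
  then show ?thesis by (simp add: amul_def sum.delta)
qed

lemma unitL: assumes "weak_bialgebra M u D E" shows "(\<Sum>a'\<in>UNIV. u a' * M a' a p) = bas a p"
proof -
  have "amul M u (bas a) p = bas a p" using assms unfolding weak_bialgebra_def by metis
  then show ?thesis by (simp add: amul_def sum.delta' mult_ac)
qed

lemma T1: assumes "weak_bialgebra M u D E"
  shows "t3mul M (\<lambda>i j l. U i j * u l) (\<lambda>i j l. u i * U j l) p q r
    = (\<Sum>b\<in>UNIV. \<Sum>b'\<in>UNIV. U p b * U b' r * M b b' q)"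
proof -
  have "t3mul M (\<lambda>i j l. U i j * u l) (\<lambda>i j l. u i * U j l) p q r =
    (\<Sum>a\<in>UNIV. \<Sum>b\<in>UNIV. \<Sum>c\<in>UNIV. \<Sum>a'\<in>UNIV. \<Sum>b'\<in>UNIV. \<Sum>c'\<in>UNIV.
      (U a b * U b' c' * M b b' q * (u c * M c c' r)) * (u a' * M a a' p))"
    by (simp add: t3mul_def mult_ac)
  also have "\<dots> = (\<Sum>a\<in>UNIV. \<Sum>b\<in>UNIV. \<Sum>c\<in>UNIV. \<Sum>b'\<in>UNIV. \<Sum>c'\<in>UNIV.
      (U a b * U b' c' * M b b' q * (u c * M c c' r)) * bas a p)"
    apply (rule sum.cong[OF refl], rule sum.cong[OF refl], rule sum.cong[OF refl])
    apply (subst swap3)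
    apply (simp add: sum_distrib_left[symmetric] unitR[OF assms])
    done
  also have "\<dots> = (\<Sum>b\<in>UNIV. \<Sum>c\<in>UNIV. \<Sum>b'\<in>UNIV. \<Sum>c'\<in>UNIV.
      (U p b * U b' c' * M b b' q * (u c * M c c' r)))"
    by (simp add: sum.delta)
  also have "\<dots> = (\<Sum>b\<in>UNIV. \<Sum>b'\<in>UNIV. \<Sum>c'\<in>UNIV. \<Sum>c\<in>UNIV.
      (U p b * U b' c' * M b b' q) * (u c * M c c' r))"
    apply (rule sum.cong[OF refl])
    apply (subst swap3)
    apply (simp add: mult_ac)
    done
  also have "\<dots> = (\<Sum>b\<in>UNIV. \<Sum>b'\<in>UNIV. \<Sum>c'\<in>UNIV.
      (U p b * U b' c' * M b b' q) * bas c' r)"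
    by (simp add: sum_distrib_left[symmetric] unitL[OF assms])
  also have "\<dots> = (\<Sum>b\<in>UNIV. \<Sum>b'\<in>UNIV. U p b * U b' r * M b b' q)"
    by (simp add: sum.delta mult_ac)
  finally show ?thesis .
qed

lemma perm1: "(\<Sum>p\<in>A. \<Sum>q\<in>B. \<Sum>r\<in>C. \<Sum>b\<in>D. \<Sum>b'\<in>G. f p q r b b') =
  (\<Sum>p\<in>A. \<Sum>b\<in>D. \<Sum>b'\<in>G. \<Sum>r\<in>C. \<Sum>q\<in>B. f p q r b b')"
proof (rule sum.cong[OF refl])
  fix p
  have "(\<Sum>q\<in>B. \<Sum>r\<in>C. \<Sum>b\<in>D. \<Sum>b'\<in>G. f p q r b b') =
        (\<Sum>r\<in>C. \<Sum>b\<in>D. \<Sum>b'\<in>G. \<Sum>q\<in>B. f p q r b b')"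
    by (subst swap3, rule sum.cong[OF refl], rule sum.cong[OF refl], rule sum.swap)
  also have "\<dots> = (\<Sum>b\<in>D. \<Sum>b'\<in>G. \<Sum>r\<in>C. \<Sum>q\<in>B. f p q r b b')"
    by (rule swap3)
  finally show "(\<Sum>q\<in>B. \<Sum>r\<in>C. \<Sum>b\<in>D. \<Sum>b'\<in>G. f p q r b b') =
        (\<Sum>b\<in>D. \<Sum>b'\<in>G. \<Sum>r\<in>C. \<Sum>q\<in>B. f p q r b b')" .
qed

lemma perm2: "(\<Sum>p\<in>A. \<Sum>q\<in>B. \<Sum>r\<in>C. \<Sum>s\<in>D. f p q r s) =
  (\<Sum>q\<in>B. \<Sum>s\<in>D. \<Sum>p\<in>A. \<Sum>r\<in>C. f p q r s)"
proof -
  have "(\<Sum>p\<in>A. \<Sum>q\<in>B. \<Sum>r\<in>C. \<Sum>s\<in>D. f p q r s) = (\<Sum>q\<in>B. \<Sum>p\<in>A. \<Sum>r\<in>C. \<Sum>s\<in>D. f p q r s)"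
    by (rule sum.swap)
  also have "\<dots> = (\<Sum>q\<in>B. \<Sum>p\<in>A. \<Sum>s\<in>D. \<Sum>r\<in>C. f p q r s)"
    by (rule sum.cong[OF refl], rule sum.cong[OF refl], rule sum.swap)
  also have "\<dots> = (\<Sum>q\<in>B. \<Sum>s\<in>D. \<Sum>p\<in>A. \<Sum>r\<in>C. f p q r s)"
    by (rule sum.cong[OF refl], rule sum.swap)
  finally show ?thesis .
qed

lemma perm3: "(\<Sum>p\<in>A. \<Sum>q\<in>B. \<Sum>r\<in>C. \<Sum>s\<in>D. f p q r s) =
  (\<Sum>r\<in>C. \<Sum>s\<in>D. \<Sum>p\<in>A. \<Sum>q\<in>B. f p q r s)"
proof -
  have "(\<Sum>p\<in>A. \<Sum>q\<in>B. \<Sum>r\<in>C. \<Sum>s\<in>D. f p q r s) = (\<Sum>r\<in>C. \<Sum>p\<in>A. \<Sum>q\<in>B. \<Sum>s\<in>D. f p q r s)"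
    by (subst swap3[symmetric], rule refl)
  also have "\<dots> = (\<Sum>r\<in>C. \<Sum>s\<in>D. \<Sum>p\<in>A. \<Sum>q\<in>B. f p q r s)"
    by (rule sum.cong[OF refl], subst swap3[symmetric], rule refl)
  finally show ?thesis .
qed

lemma mv4: "(\<Sum>z\<in>Z. \<Sum>p\<in>A. \<Sum>q\<in>B. \<Sum>r\<in>C. \<Sum>s\<in>D. f z p q r s) =
  (\<Sum>p\<in>A. \<Sum>q\<in>B. \<Sum>r\<in>C. \<Sum>s\<in>D. \<Sum>z\<in>Z. f z p q r s)"
proof -
  have "(\<Sum>z\<in>Z. \<Sum>p\<in>A. \<Sum>q\<in>B. \<Sum>r\<in>C. \<Sum>s\<in>D. f z p q r s) =
     (\<Sum>p\<in>A. \<Sum>q\<in>B. \<Sum>z\<in>Z. \<Sum>r\<in>C. \<Sum>s\<in>D. f z p q r s)"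
    by (rule swap3)
  also have "\<dots> = (\<Sum>p\<in>A. \<Sum>q\<in>B. \<Sum>r\<in>C. \<Sum>s\<in>D. \<Sum>z\<in>Z. f z p q r s)"
    by (rule sum.cong[OF refl], rule sum.cong[OF refl], rule swap3)
  finally show ?thesis .
qed

lemma T2: assumes "weak_bialgebra M u D E"
  shows "t3mul M (\<lambda>i j l. u i * U j l) (\<lambda>i j l. U i j * u l) p q r
    = (\<Sum>b\<in>UNIV. \<Sum>b'\<in>UNIV. U b r * U p b' * M b b' q)"
proof -
  have "t3mul M (\<lambda>i j l. u i * U j l) (\<lambda>i j l. U i j * u l) p q r =
    (\<Sum>a\<in>UNIV. \<Sum>b\<in>UNIV. \<Sum>c\<in>UNIV. \<Sum>a'\<in>UNIV. \<Sum>b'\<in>UNIV. \<Sum>c'\<in>UNIV.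
      (U b c * U a' b' * M b b' q * (u a * M a a' p)) * (u c' * M c c' r))"
    by (simp add: t3mul_def mult_ac)
  also have "\<dots> = (\<Sum>a\<in>UNIV. \<Sum>b\<in>UNIV. \<Sum>c\<in>UNIV. \<Sum>a'\<in>UNIV. \<Sum>b'\<in>UNIV.
      (U b c * U a' b' * M b b' q * (u a * M a a' p)) * bas c r)"
    by (simp add: sum_distrib_left[symmetric] unitR[OF assms])
  also have "\<dots> = (\<Sum>a\<in>UNIV. \<Sum>b\<in>UNIV. \<Sum>a'\<in>UNIV. \<Sum>b'\<in>UNIV.
      (U b r * U a' b' * M b b' q) * (u a * M a a' p))"
    by (simp add: sum.delta mult_ac)
  also have "\<dots> = (\<Sum>b\<in>UNIV. \<Sum>a'\<in>UNIV. \<Sum>a\<in>UNIV. \<Sum>b'\<in>UNIV.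
      (U b r * U a' b' * M b b' q) * (u a * M a a' p))"
    by (rule swap3)
  also have "\<dots> = (\<Sum>b\<in>UNIV. \<Sum>a'\<in>UNIV. \<Sum>b'\<in>UNIV. \<Sum>a\<in>UNIV.
      (U b r * U a' b' * M b b' q) * (u a * M a a' p))"
    by (rule sum.cong[OF refl], rule sum.cong[OF refl], rule sum.swap)
  also have "\<dots> = (\<Sum>b\<in>UNIV. \<Sum>a'\<in>UNIV. \<Sum>b'\<in>UNIV.
      (U b r * U a' b' * M b b' q) * bas a' p)"
    by (simp add: sum_distrib_left[symmetric] unitL[OF assms])
  also have "\<dots> = (\<Sum>b\<in>UNIV. \<Sum>b'\<in>UNIV. U b r * U p b' * M b b' q)"
    by (simp add: sum.delta mult_ac)
  finally show ?thesis .
qed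

lemma Eps_a: assumes wb: "weak_bialgebra M u D E" and vc: "corep D E dv v" and ij: "i < dv" "j < dv"
  shows "(\<Sum>k<dv. cnt E (amul M (v i k) Z) * cnt E (amul M X (v k j))) = cnt E (amul M (amul M X (v i j)) Z)"
proof -
  have "cnt E (amul M (amul M X (v i j)) Z) =
     (\<Sum>a\<in>UNIV. \<Sum>b\<in>UNIV. comul D (v i j) a b * cnt E (amul M X (bas b)) * cnt E (amul M (bas a) Z))"
    using wb unfolding weak_bialgebra_def by metis
  also have "\<dots> = (\<Sum>a\<in>UNIV. \<Sum>b\<in>UNIV. \<Sum>k<dv. (v i k a * cnt E (amul M (bas a) Z)) * (v k j b * cnt E (amul M X (bas b))))"
    using vc ij unfolding corep_def by (simp add: sum_distrib_left sum_distrib_right mult_ac)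
  also have "\<dots> = (\<Sum>k<dv. \<Sum>a\<in>UNIV. \<Sum>b\<in>UNIV. (v i k a * cnt E (amul M (bas a) Z)) * (v k j b * cnt E (amul M X (bas b))))"
    by (subst swap3[symmetric], rule refl)
  also have "\<dots> = (\<Sum>k<dv. cnt E (amul M (v i k) Z) * cnt E (amul M X (v k j)))"
    by (simp add: cnt_lin1[of E M "v i _" Z] cnt_lin2[of E M X "v _ j"] sum_product)
  finally show ?thesis by simp
qed

lemma Eps_b: assumes wb: "weak_bialgebra M u D E" and vc: "corep D E dv v" and ij: "i < dv" "j < dv"
  shows "(\<Sum>k<dv. cnt E (amul M X (v i k)) * cnt E (amul M (v k j) Z)) = cnt E (amul M (amul M X (v i j)) Z)"
proof -
  have "cnt E (amul M (amul M X (v i j)) Z) =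
     (\<Sum>a\<in>UNIV. \<Sum>b\<in>UNIV. comul D (v i j) a b * cnt E (amul M X (bas a)) * cnt E (amul M (bas b) Z))"
    using wb unfolding weak_bialgebra_def by metis
  also have "\<dots> = (\<Sum>a\<in>UNIV. \<Sum>b\<in>UNIV. \<Sum>k<dv. (v i k a * cnt E (amul M X (bas a))) * (v k j b * cnt E (amul M (bas b) Z)))"
    using vc ij unfolding corep_def by (simp add: sum_distrib_left sum_distrib_right mult_ac)
  also have "\<dots> = (\<Sum>k<dv. \<Sum>a\<in>UNIV. \<Sum>b\<in>UNIV. (v i k a * cnt E (amul M X (bas a))) * (v k j b * cnt E (amul M (bas b) Z)))"
    by (subst swap3[symmetric], rule refl)
  also have "\<dots> = (\<Sum>k<dv. cnt E (amul M X (v i k)) * cnt E (amul M (v k j) Z))"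
    by (simp add: cnt_lin1[of E M "v _ j" Z] cnt_lin2[of E M X "v i _"] sum_product)
  finally show ?thesis by simp
qed

lemma prodsum: "(\<Sum>x\<in>A. \<Sum>y\<in>B. f x y) * (\<Sum>x'\<in>C. \<Sum>y'\<in>G. g x' y') =
   (\<Sum>x\<in>A. \<Sum>y\<in>B. \<Sum>x'\<in>C. \<Sum>y'\<in>G. f x y * (g x' y' :: complex))"
  by (simp only: sum_distrib_right) (simp only: sum_distrib_left)

theorem mainTheorem7:
  fixes M :: "'i::finite \<Rightarrow> 'i \<Rightarrow> 'i \<Rightarrow> complex" and u :: "'i \<Rightarrow> complex"
    and D :: "'i \<Rightarrow> 'i \<Rightarrow> 'i \<Rightarrow> complex" and E :: "'i \<Rightarrow> complex"
    and Sm :: "'i \<Rightarrow> 'i \<Rightarrow> complex" and T :: "'i \<Rightarrow> 'i \<Rightarrow> complex"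
    and dr :: nat and R :: "'i \<Rightarrow> nat \<Rightarrow> nat \<Rightarrow> complex"
    and dv :: nat and v :: "nat \<Rightarrow> nat \<Rightarrow> 'i \<Rightarrow> complex"
  assumes hopf: "cstar_weak_hopf M u D E Sm T"
    and rho: "star_rep M T dr R"
    and vco: "corep D E dv v"
    and vS: "\<forall>i<dv. \<forall>j<dv. lin Sm (v i j) = alin T (v j i)"
  shows "(\<forall>i<dv. \<forall>a<dr. \<forall>k<dv. \<forall>j<dv. \<forall>b<dr. \<forall>l<dv.
            comp3 dv dr dv (ext_r (Pop M u D E R v)) (ext_l (Qop M u D E R v)) i a k j b l
          = comp3 dv dr dv (ext_l (Qop M u D E R v)) (ext_r (Pop M u D E R v)) i a k j b l)
       \<and> (\<forall>a<dr. \<forall>i<dv. \<forall>c<dr. \<forall>b<dr. \<forall>j<dv. \<forall>e<dr.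
            comp3 dr dv dr (ext_r (Qop M u D E R v)) (ext_l (Pop M u D E R v)) a i c b j e
          = comp3 dr dv dr (ext_l (Pop M u D E R v)) (ext_r (Qop M u D E R v)) a i c b j e)"
proof -
  have wb: "weak_bialgebra M u D E"
    using hopf unfolding cstar_weak_hopf_def weak_hopf_def by blast
  define U where "U = comul D u"
  have t3: "t3mul M (\<lambda>i j l. U i j * u l) (\<lambda>i j l. u i * U j l) =
            t3mul M (\<lambda>i j l. u i * U j l) (\<lambda>i j l. U i j * u l)"
    using wb unfolding weak_bialgebra_def Let_def U_def by metis
  have Pf: "Pop M u D E R v i' a' j' b'' = (\<Sum>x\<in>UNIV. \<Sum>y\<in>UNIV. U x y * cnt E (amul M (bas x) (v i' j')) * R y a' b'')"
    for i' a' j' b'' by (simp add: Pop_def repm_bas U_def)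
  have Qf: "Qop M u D E R v a' i' b'' j' = (\<Sum>x\<in>UNIV. \<Sum>y\<in>UNIV. U x y * R x a' b'' * cnt E (amul M (v i' j') (bas y)))"
    for i' a' j' b'' by (simp add: Qop_def repm_bas U_def)
  have Wsum: "(\<Sum>c<dr. R y a c * R x' c b) = (\<Sum>q\<in>UNIV. M y x' q * R q a b)" if "a < dr" "b < dr" for y x' a b
  proof -
    have "repm R (amul M (bas y) (bas x')) a b = (\<Sum>c<dr. repm R (bas y) a c * repm R (bas x') c b)"
      using rho that unfolding star_rep_def by blast
    then show ?thesis by (simp add: amul_bas repm_bas repm_def)
  qed
  have part1: "comp3 dv dr dv (ext_r (Pop M u D E R v)) (ext_l (Qop M u D E R v)) i a k j b l
          = comp3 dv dr dv (ext_l (Qop M u D E R v)) (ext_r (Pop M u D E R v)) i a k j b l"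
    if bd: "i < dv" "a < dr" "k < dv" "j < dv" "b < dr" "l < dv" for i a k j b l
  proof -
    define eL where "eL x = cnt E (amul M (bas x) (v i j))" for x
    define eR where "eR y = cnt E (amul M (v k l) (bas y))" for y
    define W where "W y x' = (\<Sum>q\<in>UNIV. M y x' q * R q a b)" for y x'
    define F where "F X = (\<Sum>p\<in>UNIV. \<Sum>q\<in>UNIV. \<Sum>r\<in>UNIV. X p q r * (eL p * R q a b * eR r))" for X
    have "comp3 dv dr dv (ext_r (Pop M u D E R v)) (ext_l (Qop M u D E R v)) i a k j b l
        = (\<Sum>b'<dr. \<Sum>x\<in>UNIV. \<Sum>y\<in>UNIV. \<Sum>x'\<in>UNIV. \<Sum>y'\<in>UNIV.
            (U x y * eL x * R y a b') * (U x' y' * R x' b' b * eR y'))"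
      using bd by (simp add: comp3_rl Pf Qf eL_def eR_def prodsum)
    also have "\<dots> = (\<Sum>x\<in>UNIV. \<Sum>y\<in>UNIV. \<Sum>x'\<in>UNIV. \<Sum>y'\<in>UNIV. \<Sum>b'<dr.
            (U x y * eL x * R y a b') * (U x' y' * R x' b' b * eR y'))"
      by (rule mv4)
    also have "\<dots> = (\<Sum>x\<in>UNIV. \<Sum>y\<in>UNIV. \<Sum>x'\<in>UNIV. \<Sum>y'\<in>UNIV.
            (U x y * U x' y' * eL x * eR y') * W y x')"
      using bd by (simp add: W_def Wsum[symmetric] sum_distrib_left mult_ac)
    also have "\<dots> = F (t3mul M (\<lambda>i j l. U i j * u l) (\<lambda>i j l. u i * U j l))"
    proof -
      have "F (t3mul M (\<lambda>i j l. U i j * u l) (\<lambda>i j l. u i * U j l)) =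
        (\<Sum>p\<in>UNIV. \<Sum>q\<in>UNIV. \<Sum>r\<in>UNIV. \<Sum>x\<in>UNIV. \<Sum>y\<in>UNIV. (U p x * U y r * M x y q) * (eL p * R q a b * eR r))"
        by (simp add: F_def T1[OF wb] sum_distrib_right)
      also have "\<dots> = (\<Sum>p\<in>UNIV. \<Sum>x\<in>UNIV. \<Sum>y\<in>UNIV. \<Sum>r\<in>UNIV. \<Sum>q\<in>UNIV. (U p x * U y r * M x y q) * (eL p * R q a b * eR r))"
        by (rule perm1)
      also have "\<dots> = (\<Sum>x\<in>UNIV. \<Sum>y\<in>UNIV. \<Sum>x'\<in>UNIV. \<Sum>y'\<in>UNIV.
            (U x y * U x' y' * eL x * eR y') * W y x')"
        by (simp add: W_def sum_distrib_left mult_ac)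
      finally show ?thesis by simp
    qed
    also have "\<dots> = F (t3mul M (\<lambda>i j l. u i * U j l) (\<lambda>i j l. U i j * u l))"
      by (simp add: t3)
    also have "\<dots> = (\<Sum>x\<in>UNIV. \<Sum>y\<in>UNIV. \<Sum>x'\<in>UNIV. \<Sum>y'\<in>UNIV.
            (U x y * U x' y' * eR y * eL x') * W x y')"
    proof -
      have "F (t3mul M (\<lambda>i j l. u i * U j l) (\<lambda>i j l. U i j * u l)) =
        (\<Sum>p\<in>UNIV. \<Sum>q\<in>UNIV. \<Sum>r\<in>UNIV. \<Sum>x\<in>UNIV. \<Sum>y\<in>UNIV. (U x r * U p y * M x y q) * (eL p * R q a b * eR r))"
        by (simp add: F_def T2[OF wb] sum_distrib_right)
      also have "\<dots> = (\<Sum>p\<in>UNIV. \<Sum>x\<in>UNIV. \<Sum>y\<in>UNIV. \<Sum>r\<in>UNIV. \<Sum>q\<in>UNIV. (U x r * U p y * M x y q) * (eL p * R q a b * eR r))"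
        by (rule perm1)
      also have "\<dots> = (\<Sum>p\<in>UNIV. \<Sum>x\<in>UNIV. \<Sum>y\<in>UNIV. \<Sum>r\<in>UNIV. (U x r * U p y * eR r * eL p) * W x y)"
        by (simp add: W_def sum_distrib_left mult_ac)
      also have "\<dots> = (\<Sum>x\<in>UNIV. \<Sum>r\<in>UNIV. \<Sum>p\<in>UNIV. \<Sum>y\<in>UNIV. (U x r * U p y * eR r * eL p) * W x y)"
        by (rule perm2)
      finally show ?thesis .
    qed
    also have "\<dots> = (\<Sum>x\<in>UNIV. \<Sum>y\<in>UNIV. \<Sum>x'\<in>UNIV. \<Sum>y'\<in>UNIV. \<Sum>b'<dr.
            (U x y * R x a b' * eR y) * (U x' y' * eL x' * R y' b' b))"
      using bd by (simp add: W_def Wsum[symmetric] sum_distrib_left mult_ac)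
    also have "\<dots> = (\<Sum>b'<dr. \<Sum>x\<in>UNIV. \<Sum>y\<in>UNIV. \<Sum>x'\<in>UNIV. \<Sum>y'\<in>UNIV.
            (U x y * R x a b' * eR y) * (U x' y' * eL x' * R y' b' b))"
      by (rule mv4[symmetric])
    also have "\<dots> = comp3 dv dr dv (ext_l (Qop M u D E R v)) (ext_r (Pop M u D E R v)) i a k j b l"
      using bd by (simp add: comp3_lr Pf Qf eL_def eR_def prodsum)
    finally show ?thesis .
  qed
  have part2: "comp3 dr dv dr (ext_r (Qop M u D E R v)) (ext_l (Pop M u D E R v)) a i c b j e
          = comp3 dr dv dr (ext_l (Pop M u D E R v)) (ext_r (Qop M u D E R v)) a i c b j e"
    if bd: "a < dr" "i < dv" "c < dr" "b < dr" "j < dv" "e < dr" for a i c b j e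
  proof -
    define Om where "Om x y = cnt E (amul M (amul M (bas x) (v i j)) (bas y))" for x y
    have "comp3 dr dv dr (ext_r (Qop M u D E R v)) (ext_l (Pop M u D E R v)) a i c b j e
        = (\<Sum>b'<dv. \<Sum>x\<in>UNIV. \<Sum>y\<in>UNIV. \<Sum>x'\<in>UNIV. \<Sum>y'\<in>UNIV.
            (U x y * R x a b * cnt E (amul M (v i b') (bas y))) * (U x' y' * cnt E (amul M (bas x') (v b' j)) * R y' c e))"
      using bd by (simp add: comp3_rl Pf Qf prodsum)
    also have "\<dots> = (\<Sum>x\<in>UNIV. \<Sum>y\<in>UNIV. \<Sum>x'\<in>UNIV. \<Sum>y'\<in>UNIV. \<Sum>b'<dv.
            (U x y * R x a b * cnt E (amul M (v i b') (bas y))) * (U x' y' * cnt E (amul M (bas x') (v b' j)) * R y' c e))"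
      by (rule mv4)
    also have "\<dots> = (\<Sum>x\<in>UNIV. \<Sum>y\<in>UNIV. \<Sum>x'\<in>UNIV. \<Sum>y'\<in>UNIV.
            (U x y * U x' y' * R x a b * R y' c e) * Om x' y)"
      using bd by (simp add: Om_def Eps_a[OF wb vco, symmetric] sum_distrib_left mult_ac)
    also have "\<dots> = (\<Sum>x'\<in>UNIV. \<Sum>y'\<in>UNIV. \<Sum>x\<in>UNIV. \<Sum>y\<in>UNIV.
            (U x y * U x' y' * R x a b * R y' c e) * Om x' y)"
      by (rule perm3)
    also have "\<dots> = (\<Sum>x\<in>UNIV. \<Sum>y\<in>UNIV. \<Sum>x'\<in>UNIV. \<Sum>y'\<in>UNIV. \<Sum>b'<dv.
            (U x y * cnt E (amul M (bas x) (v i b')) * R y c e) * (U x' y' * R x' a b * cnt E (amul M (v b' j) (bas y'))))"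
      using bd by (simp add: Om_def Eps_b[OF wb vco, symmetric] sum_distrib_left mult_ac)
    also have "\<dots> = (\<Sum>b'<dv. \<Sum>x\<in>UNIV. \<Sum>y\<in>UNIV. \<Sum>x'\<in>UNIV. \<Sum>y'\<in>UNIV.
            (U x y * cnt E (amul M (bas x) (v i b')) * R y c e) * (U x' y' * R x' a b * cnt E (amul M (v b' j) (bas y'))))"
      by (rule mv4[symmetric])
    also have "\<dots> = comp3 dr dv dr (ext_l (Pop M u D E R v)) (ext_r (Qop M u D E R v)) a i c b j e"
      using bd by (simp add: comp3_lr Pf Qf prodsum)
    finally show ?thesis .
  qed
  show ?thesis using part1 part2 by blast
qed

end
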